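(* For integers $m\ge1$, $n\ge2$ and real $\alpha\notin\pi\mathbb{Z}$, $$\sum_{k=0}^{n-1}\cot^m\frac{\alpha+k\pi}{n}=(-1)^{m/2}\,n\,\mathbb{1}_{m\text{ even}}+\frac{(-i)^m}{(m-1)!}\sum_{\nu\in\mathcal{P}^{\mathrm{odd}}(m)}P_{|\nu|-1}(\cot\alpha)\,(in)^{|\nu|}\,\mu(\hat0_m,\nu).$$
   Context: The derivative polynomials $P_k$ are defined by $P_0(x)=x$, $P_{k+1}(x)=(1+x^2)P_k'(x)$; equivalently $\frac{d^k}{dz^k}\tan z=P_k(\tan z)$ (and $\frac{d^k}{dz^k}\cot z=(-1)^kP_k(\cot z)$). $\mathcal{P}^{\mathrm{odd}}(m)$ is the set of set partitions of $\{1,\dots,m\}$ all of whose blocks have odd cardinality; $|\nu|$ is the number of blocks of $\nu$; and $\mu(\hat0_m,\nu)=\prod_{B\in\nu}(-1)^{|B|-1}(|B|-1)!$ (the Möbius function of the partition lattice). $\mathbb{1}_{m\text{ even}}$ is $1$ if $m$ is even and $0$ otherwise. *)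

theory Defs
  imports Complex_Main "HOL-Library.Disjoint_Sets" "HOL-Computational_Algebra.Polynomial"
begin

fun deriv_poly :: "nat \<Rightarrow> real poly" where
  "deriv_poly 0 = [:0, 1:]"
| "deriv_poly (Suc k) = [:1, 0, 1:] * pderiv (deriv_poly k)"

definition odd_partitions :: "nat \<Rightarrow> nat set set set" where
  "odd_partitions m = {\<nu>. partition_on {1..m} \<nu> \<and> (\<forall>B\<in>\<nu>. odd (card B))}"

text \<open>Moebius function of the partition lattice, mu(0_m, nu).\<close>
definition mobius_part :: "nat set set \<Rightarrow> int" where
  "mobius_part \<nu> = (\<Prod>B\<in>\<nu>. (-1) ^ (card B - 1) * fact (card B - 1))"

end

theory Submission
  imports Defs "HOL-Complex_Analysis.Complex_Analysis"
begin

lemma higher_deriv_seq: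
  fixes f :: "complex \<Rightarrow> complex"
  assumes S: "open S" and f0: "\<And>t. t \<in> S \<Longrightarrow> f t = F 0 t"
    and d: "\<And>j t. t \<in> S \<Longrightarrow> (F j has_field_derivative F (Suc j) t) (at t)"
  shows "t \<in> S \<Longrightarrow> (deriv ^^ j) f t = F j t"
proof (induction j arbitrary: t)
  case 0 then show ?case by (simp add: f0)
next
  case (Suc j)
  have "((deriv ^^ j) f has_field_derivative F (Suc j) t) (at t)"
    by (rule has_field_derivative_transform_within_open[OF d[OF Suc.prems] S Suc.prems])
       (simp add: Suc.IH)
  then show ?case by (simp add: DERIV_imp_deriv)
qed

lemma mp_mult: "map_poly (of_real::real\<Rightarrow>complex) (p*q) = map_poly of_real p * map_poly of_real q"
  by (rule poly_eqI) (simp add: coeff_map_poly coeff_mult)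

lemma mp_pderiv: "map_poly (of_real::real\<Rightarrow>complex) (pderiv p) = pderiv (map_poly of_real p)"
  by (rule poly_eqI) (simp add: coeff_map_poly coeff_pderiv)

lemma mp_poly: "poly (map_poly (of_real::real\<Rightarrow>complex) p) (of_real x) = of_real (poly p x)"
  by (induction p) (simp_all add: map_poly_pCons)

definition Pc :: "nat \<Rightarrow> complex poly" where "Pc k = map_poly of_real (deriv_poly k)"

lemma Pc_Suc: "Pc (Suc k) = [:1,0,1:] * pderiv (Pc k)"
proof -
  have "map_poly (of_real::real\<Rightarrow>complex) [:1,0,1:] = [:1,0,1:]" by (simp add: map_poly_pCons)
  then show ?thesis unfolding Pc_def deriv_poly.simps mp_mult mp_pderiv by simp
qed

lemma cot_deriv:
  fixes z :: complex assumes "sin z \<noteq> 0"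
  shows "(cot has_field_derivative -(1 + cot z ^ 2)) (at z)"
proof -
  have 1: "cos z * cos z + sin z * sin z = 1" using sin_cos_squared_add2[of z] by (simp add: power2_eq_square)
  have "- (1 + cot z ^ 2) = - ((cos z * cos z + sin z * sin z) + cot z ^ 2)" by (simp add: 1)
  also have "\<dots> = (- sin z * sin z - cos z * cos z) / (sin z * sin z)"
    using assms by (simp add: cot_def field_simps power2_eq_square)
  finally have e: "(- sin z * sin z - cos z * cos z) / (sin z * sin z) = - (1 + cot z ^ 2)" by simp
  have "((\<lambda>z. cos z / sin z) has_field_derivative (- sin z * sin z - cos z * cos z) / (sin z * sin z)) (at z)"
    using assms by (auto intro!: derivative_eq_intros simp: power2_eq_square)
  then show ?thesis unfolding e by (simp add: cot_def[abs_def])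
qed

lemma higher_deriv_cot:
  fixes z :: complex assumes "sin z \<noteq> 0"
  shows "(deriv ^^ k) cot z = (-1)^k * poly (Pc k) (cot z)"
proof -
  have op: "open {z::complex. sin z \<noteq> 0}"
    by (rule open_Collect_neq) (auto intro!: continuous_intros)
  show ?thesis
  proof (rule higher_deriv_seq[OF op, where F="\<lambda>k z. (-1)^k * poly (Pc k) (cot z)"])
    show "cot t = (- 1) ^ 0 * poly (Pc 0) (cot t)" for t
      by (simp add: Pc_def map_poly_pCons)
    show "((\<lambda>z. (- 1) ^ j * poly (Pc j) (cot z)) has_field_derivative
          (- 1) ^ Suc j * poly (Pc (Suc j)) (cot t)) (at t)" if "t \<in> {z. sin z \<noteq> 0}" for j t
      using that
      by (auto intro!: derivative_eq_intros cot_deriv simp: Pc_Suc algebra_simps power2_eq_square)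
  qed (use assms in auto)
qed

lemma d_inv_pow:
  fixes K p q s :: complex
  assumes "p * s + q \<noteq> 0"
  shows "((\<lambda>t. K / (p * t + q)^(Suc j)) has_field_derivative - (of_nat (Suc j) * K * p / (p * s + q)^(Suc (Suc j)))) (at s)"
proof -
  define x where "x = p * s + q"
  have x: "x \<noteq> 0" using assms by (simp add: x_def)
  have d: "((\<lambda>t. (p * t + q)^Suc j) has_field_derivative of_nat (Suc j) * p * (p * s + q)^j) (at s)"
  proof -
    have "((\<lambda>t. p*t+q) has_field_derivative p) (at s)" by (auto intro!: derivative_eq_intros)
    from DERIV_power[OF this, where n="Suc j"] show ?thesis by (simp del: power_Suc add: mult_ac)
  qed
  have D: "((\<lambda>t. K * inverse ((p * t + q)^(Suc j))) has_field_derivative 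
     K * (- (inverse ((p * s + q)^(Suc j)) * (of_nat (Suc j) * p * (p * s + q)^j) * inverse ((p * s + q)^(Suc j))))) (at s)"
    using assms by (intro DERIV_cmult DERIV_inverse' d) auto
  have E: "K * (- (inverse ((p * s + q)^(Suc j)) * (of_nat (Suc j) * p * (p * s + q)^j) * inverse ((p * s + q)^(Suc j))))
     = - (of_nat (Suc j) * K * p / (p * s + q)^(Suc (Suc j)))"
  proof -
    have "x^(Suc j) * x^(Suc j) = x^j * x^(Suc (Suc j))" by (simp add: power_add[symmetric])
    then show ?thesis unfolding x_def[symmetric] using x
      by (simp add: divide_simps del: power_Suc)
  qed
  show ?thesis using DERIV_cong[OF D E] by (simp only: divide_inverse)
qed

lemma hd_pf:
  fixes c1 c2 a1 a2 t :: complex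
  assumes "t \<noteq> a1" "t \<noteq> a2"
  shows "(deriv ^^ j) (\<lambda>t. c1 / (t - a1) + c2 / (t - a2)) t
       = (-1)^j * fact j * (c1 / (t - a1)^(Suc j) + c2 / (t - a2)^(Suc j))"
proof -
  have op: "open (- {a1, a2})" by auto
  show ?thesis
  proof (rule higher_deriv_seq[OF op, where F="\<lambda>j t. (-1)^j * fact j * (c1 / (t - a1)^(Suc j) + c2 / (t - a2)^(Suc j))"])
    fix j and s :: complex assume s: "s \<in> - {a1, a2}"
    then have n1: "s - a1 \<noteq> 0" and n2: "s - a2 \<noteq> 0" by auto
    show "((\<lambda>t. (-1)^j * fact j * (c1 / (t - a1)^(Suc j) + c2 / (t - a2)^(Suc j))) has_field_derivative
          (-1)^Suc j * fact (Suc j) * (c1 / (s - a1)^(Suc (Suc j)) + c2 / (s - a2)^(Suc (Suc j)))) (at s)"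
    proof -
      have d1: "((\<lambda>t. c1 / (t - a1)^(Suc j)) has_field_derivative - (of_nat (Suc j) * c1 / (s - a1)^(Suc (Suc j)))) (at s)"
        using d_inv_pow[of 1 s "-a1" c1 j] n1 by simp
      have d2: "((\<lambda>t. c2 / (t - a2)^(Suc j)) has_field_derivative - (of_nat (Suc j) * c2 / (s - a2)^(Suc (Suc j)))) (at s)"
        using d_inv_pow[of 1 s "-a2" c2 j] n2 by simp
      show ?thesis
        by (rule DERIV_cong[OF DERIV_cmult[OF DERIV_add[OF d1 d2]]]) (simp add: algebra_simps add_divide_distrib power_Suc[of "-1::complex"] del: power_Suc)
    qed
  qed (use assms in auto)
qed

lemma d_geom:
  fixes c s :: complex
  assumes n1: "1 - s * c \<noteq> 0"
  shows "((\<lambda>t. fact j * c ^ Suc j / (1 - t * c) ^ Suc j) has_field_derivative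
          fact (Suc j) * c ^ Suc (Suc j) / (1 - s * c) ^ Suc (Suc j)) (at s)"
proof -
  have d1: "((\<lambda>t. c ^ Suc j / (-c * t + 1)^(Suc j)) has_field_derivative - (of_nat (Suc j) * c ^ Suc j * (-c) / (-c * s + 1)^(Suc (Suc j)))) (at s)"
    using d_inv_pow[of "-c" s 1 "c ^ Suc j" j] n1 by (simp add: algebra_simps)
  have e: "\<And>t. -c * t + 1 = 1 - t * c" by (simp add: algebra_simps)
  have fe: "(\<lambda>t. fact j * c^Suc j/(1-t*c)^Suc j) = (\<lambda>t. fact j * (c^Suc j/(-c*t+1)^Suc j))"
  proof
    fix t
    have "-c*t+1 = 1 - t*c" by (simp add: algebra_simps)
    then show "fact j * c^Suc j/(1-t*c)^Suc j = fact j * (c^Suc j/(-c*t+1)^Suc j)"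
      by (simp only: times_divide_eq_right)
  qed
  show ?thesis unfolding fe
    by (rule DERIV_cong[OF DERIV_cmult[OF d1, of "fact j"]]) (simp add: e algebra_simps add_divide_distrib diff_divide_distrib power_Suc[of c] del: power_Suc)
qed

lemma hd_cot_shift:
  fixes a y :: complex
  assumes "sin (a + y) \<noteq> 0"
  shows "(deriv ^^ k) (\<lambda>y. - cot (a + y)) y = - ((-1)^k * poly (Pc k) (cot (a + y)))"
proof -
  have op: "open {y::complex. sin (a + y) \<noteq> 0}"
    by (rule open_Collect_neq) (auto intro!: continuous_intros)
  show ?thesis
  proof (rule higher_deriv_seq[OF op, where F="\<lambda>k y. - ((-1)^k * poly (Pc k) (cot (a + y)))"])
    show "- cot (a + t) = - ((- 1) ^ 0 * poly (Pc 0) (cot (a + t)))" for t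
      by (simp add: Pc_def map_poly_pCons)
    fix j and t :: complex assume "t \<in> {y. sin (a + y) \<noteq> 0}"
    then have s: "sin (a + t) \<noteq> 0" by simp
    have c: "((\<lambda>y. cot (a + y)) has_field_derivative -(1 + cot (a + t) ^ 2)) (at t)"
    proof -
      have "((\<lambda>y. a + y) has_field_derivative 1) (at t)" by (auto intro!: derivative_eq_intros)
      from DERIV_chain2[where f=cot and g="\<lambda>y. a + y", OF cot_deriv[OF s] this] show ?thesis by simp
    qed
    show "((\<lambda>y. - ((- 1) ^ j * poly (Pc j) (cot (a + y)))) has_field_derivative
          - ((- 1) ^ Suc j * poly (Pc (Suc j)) (cot (a + t)))) (at t)"
    proof -
      have dp: "((\<lambda>y. poly (Pc j) (cot (a + y))) has_field_derivative poly (pderiv (Pc j)) (cot (a+t)) * -(1 + cot (a + t) ^ 2)) (at t)"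
        by (rule DERIV_chain2[where f="poly (Pc j)" and g="\<lambda>y. cot (a+y)", OF poly_DERIV c])
      show ?thesis
        by (rule DERIV_cong[OF DERIV_minus[OF DERIV_cmult[OF dp, of "(-1)^j"]]])
           (simp add: Pc_Suc algebra_simps power2_eq_square)
    qed
  qed (use assms in auto)
qed

lemma cot_exp: "cot (z::complex) = \<i> * (exp(2*\<i>*z) + 1) / (exp(2*\<i>*z) - 1)"
proof -
  define u where "u = exp (\<i> * z)"
  have u0: "u \<noteq> 0" by (simp add: u_def)
  have e1: "exp (-(\<i> * z)) = inverse u" by (simp add: u_def exp_minus)
  have e2: "exp (2*\<i>*z) = u * u"
  proof -
    have "exp (2*\<i>*z) = exp (\<i>*z + \<i>*z)" by (rule arg_cong[where f=exp]) simp
    then show ?thesis by (simp only: u_def exp_add)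
  qed
  show ?thesis
  proof (cases "u * u = 1")
    case True
    then have "u - inverse u = 0" using u0 by (simp add: field_simps)
    then have "sin z = 0" by (simp add: sin_exp_eq e1 u_def)
    then show ?thesis using True by (simp add: cot_def e2)
  next
    case False
    then have "u - inverse u \<noteq> 0" using u0 by (simp add: field_simps)
    moreover have sE: "sin z = (u - inverse u)/(2*\<i>)" and cE: "cos z = (u + inverse u)/2"
      by (simp_all add: sin_exp_eq cos_exp_eq e1 u_def)
    ultimately have "cot z = ((u + inverse u)/2) / ((u - inverse u)/(2*\<i>))"
      by (simp only: cot_def)
    also have "\<dots> = \<i> * (u * u + 1) / (u * u - 1)"
      using False u0 by (simp add: field_simps)
    finally show ?thesis by (simp only: e2)
  qed
qed

lemma sin_exp2: "exp (2*\<i>*y) = 1 \<Longrightarrow> sin (y::complex) = 0"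
proof -
  assume a: "exp (2*\<i>*y) = 1"
  define u where "u = exp (\<i> * y)"
  have e1: "exp (-(\<i> * y)) = inverse u" by (simp add: u_def exp_minus)
  have "exp (2*\<i>*y) = exp (\<i>*y + \<i>*y)" by (rule arg_cong[where f=exp]) simp
  then have "u * u = 1" using a by (simp only: u_def exp_add)
  then have "u = inverse u" by (metis inverse_unique)
  then show ?thesis by (simp add: sin_exp_eq e1 u_def)
qed

lemma sum_inv_roots:
  fixes w z :: complex
  assumes n: "n > 0" and zn: "z ^ n = 1" and zj: "\<And>j. 0 < j \<Longrightarrow> j < n \<Longrightarrow> z ^ j \<noteq> 1"
    and wn: "w ^ n \<noteq> 1"
  shows "(\<Sum>k<n. 1 / (1 - w * z ^ k)) = of_nat n / (1 - w ^ n)"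
proof -
  have zkn: "(z ^ k) ^ n = 1" for k
  proof -
    have "(z^k)^n = (z^n)^k" by (simp only: power_mult[symmetric] mult.commute)
    then show ?thesis by (simp add: zn)
  qed
  have pw: "(w * z ^ k) ^ n = w ^ n" for k
    by (simp only: power_mult_distrib zkn mult_1_right)
  have t: "1 / (1 - w * z ^ k) = (\<Sum>j<n. w ^ j * (z ^ j) ^ k) / (1 - w ^ n)" for k
  proof -
    have ne: "w * z ^ k \<noteq> 1" using pw[of k] wn by auto
    have "(\<Sum>j<n. (w * z ^ k) ^ j) = (1 - w ^ n) / (1 - w * z ^ k)"
      using ne by (simp add: sum_gp_strict pw)
    moreover have "(\<Sum>j<n. (w * z ^ k) ^ j) = (\<Sum>j<n. w ^ j * (z ^ j) ^ k)"
      by (simp add: power_mult_distrib flip: power_mult) (simp add: mult.commute)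
    ultimately show ?thesis using ne wn by (simp add: field_simps)
  qed
  have inner: "(\<Sum>k<n. (z ^ j) ^ k) = (if j = 0 then of_nat n else 0)" if "j < n" for j
  proof (cases "j = 0")
    case False
    have "z ^ j \<noteq> 1" using zj False that by auto
    moreover have "(z ^ j) ^ n = 1" by (rule zkn)
    ultimately show ?thesis using False by (simp add: sum_gp_strict)
  qed simp
  have "(\<Sum>k<n. 1 / (1 - w * z ^ k)) = (\<Sum>k<n. \<Sum>j<n. w ^ j * (z ^ j) ^ k) / (1 - w ^ n)"
    by (simp add: t sum_divide_distrib)
  also have "(\<Sum>k<n. \<Sum>j<n. w ^ j * (z ^ j) ^ k) = (\<Sum>j<n. w ^ j * (\<Sum>k<n. (z ^ j) ^ k))"
    by (subst sum.swap) (simp add: sum_distrib_left)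
  also have "\<dots> = (\<Sum>j<n. if j = 0 then of_nat n else 0)"
    by (rule sum.cong) (auto simp: inner)
  also have "\<dots> = of_nat n" using n by simp
  finally show ?thesis .
qed

lemma cot_sum:
  fixes x :: complex
  assumes n: "n > 0" and s: "sin (of_nat n * x) \<noteq> 0"
  shows "(\<Sum>k<n. cot (x + of_nat k * of_real pi / of_nat n)) = of_nat n * cot (of_nat n * x)"
proof -
  define w where "w = exp (2*\<i>*x)"
  define z :: complex where "z = exp (2*\<i>*complex_of_real pi / of_nat n)"
  have wn: "w ^ n = exp (2*\<i>*(of_nat n * x))" by (simp add: w_def mult.commute mult.left_commute flip: exp_of_nat_mult)
  have zn: "z ^ n = 1" using n by (simp add: z_def flip: exp_of_nat_mult) (simp add: exp_eq_1)
  have zkn: "(z ^ k) ^ n = 1" for k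
  proof -
    have "(z^k)^n = (z^n)^k" by (simp only: power_mult[symmetric] mult.commute)
    then show ?thesis by (simp add: zn)
  qed
  have zj: "z ^ j \<noteq> 1" if "0 < j" "j < n" for j
  proof
    assume "z ^ j = 1"
    then have "exp (of_nat j * (2*\<i>*complex_of_real pi / of_nat n)) = 1" by (simp add: z_def flip: exp_of_nat_mult)
    then obtain q :: int where q: "real j * (2 * pi) / real n = 2 * of_int q * pi" by (auto simp: exp_eq_1)
    then have "real j = real n * of_int q" using n by (simp add: field_simps)
    then have "int j = int n * q" by (metis of_int_eq_iff of_int_mult of_int_of_nat_eq)
    then show False
    proof (cases "q \<le> 0")
      case True
      then have "int n * q \<le> 0" by (simp add: mult_nonneg_nonpos)
      then show False using \<open>int j = int n * q\<close> that by linarith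
    next
      case False
      then have "int n * 1 \<le> int n * q" by (intro mult_left_mono) auto
      then show False using \<open>int j = int n * q\<close> that by linarith
    qed
  qed
  have sE: "exp (2*\<i>*(of_nat n * x)) \<noteq> 1"
  proof
    assume "exp (2*\<i>*(of_nat n * x)) = 1"
    then show False using s sin_exp2 by blast
  qed
  then have wn1: "w ^ n \<noteq> 1" by (simp add: wn)
  have tm: "cot (x + of_nat k * of_real pi / of_nat n) = \<i> * (1 - 2 * (1 / (1 - w * z ^ k)))" for k
  proof -
    have "exp (2*\<i>*(x + of_nat k * of_real pi / of_nat n)) = w * z ^ k"
      by (simp add: w_def z_def distrib_left mult.commute mult.left_commute exp_add flip: exp_of_nat_mult)
    moreover have "w * z ^ k \<noteq> 1"
    proof
      assume "w * z ^ k = 1"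
      then have "(w * z ^ k) ^ n = 1" by simp
      then show False using wn1 by (simp only: power_mult_distrib zkn mult_1_right)
    qed
    ultimately show ?thesis by (simp add: cot_exp field_simps)
  qed
  have "(\<Sum>k<n. cot (x + of_nat k * of_real pi / of_nat n)) = (\<Sum>k<n. \<i> - 2 * \<i> * (1 / (1 - w * z ^ k)))"
    by (simp add: tm algebra_simps)
  also have "\<dots> = of_nat n * \<i> - 2 * \<i> * (\<Sum>k<n. 1 / (1 - w * z ^ k))"
    by (simp add: sum_subtractf sum_distrib_left)
  also have "\<dots> = of_nat n * \<i> - 2 * \<i> * (of_nat n / (1 - w ^ n))"
    by (simp only: sum_inv_roots[OF n zn zj wn1])
  also have "\<dots> = of_nat n * cot (of_nat n * x)"
  proof -
    have c: "cot (of_nat n * x) = \<i> * (w ^ n + 1) / (w ^ n - 1)" by (simp only: cot_exp wn[symmetric])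
    have "1 - w ^ n \<noteq> 0" "w ^ n - 1 \<noteq> 0" using wn1 by auto
    then show ?thesis unfolding c by (simp add: field_simps)
  qed
  finally show ?thesis .
qed

lemma part_block_facts:
  assumes "partition_on A \<nu>" "B \<in> \<nu>"
  shows "B \<subseteq> A" "B \<noteq> {}" "disjnt B (\<Union>(\<nu> - {B}))"
  using assms unfolding partition_on_def disjoint_def pairwise_def disjnt_def by blast+

lemma part_remove_block:
  assumes "partition_on A \<nu>" "B \<in> \<nu>"
  shows "partition_on (A - B) (\<nu> - {B})"
proof -
  have "\<nu> = insert B (\<nu> - {B})" using assms(2) by blast
  then have "partition_on A (insert B (\<nu> - {B}))" using assms(1) by simp
  then show ?thesis using partition_on_insert[OF part_block_facts(3)[OF assms]] by blast
qed

lemma part_insert_sum: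
  fixes f :: "'a set set \<Rightarrow> 'b::comm_monoid_add"
  assumes fin: "finite A" and aA: "a \<notin> A"
  shows "(\<Sum>\<mu> | partition_on (insert a A) \<mu>. f \<mu>)
       = (\<Sum>\<nu> | partition_on A \<nu>. f (insert {a} \<nu>) + (\<Sum>B\<in>\<nu>. f (insert (insert a B) (\<nu> - {B}))))"
proof -
  define PA where "PA = {\<nu>. partition_on A \<nu>}"
  define PA' where "PA' = {\<mu>. partition_on (insert a A) \<mu>}"
  define \<Phi> where "\<Phi> = (\<lambda>(\<nu>::'a set set, B). insert (insert a B) (\<nu> - {B}))"
  define X where "X = insert {a} ` PA"
  define Y where "Y = \<Phi> ` Sigma PA (\<lambda>\<nu>. \<nu>)"
  have finPA: "finite PA" unfolding PA_def by (rule finitely_many_partition_on[OF fin])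
  have finPA': "finite PA'" unfolding PA'_def by (rule finitely_many_partition_on) (simp add: fin)
  have finS: "finite (Sigma PA (\<lambda>\<nu>. \<nu>))"
    using finPA by (auto intro!: finite_SigmaI finite_elements[OF fin] simp: PA_def)
  have blk: "B \<subseteq> A" "B \<noteq> {}" "disjnt B (\<Union>(\<nu> - {B}))" "a \<notin> B" if "\<nu> \<in> PA" "B \<in> \<nu>" for \<nu> B
    using part_block_facts[of A \<nu> B] that aA by (auto simp: PA_def)
  have Un: "\<Union>\<nu> = A" if "\<nu> \<in> PA" for \<nu> using that by (auto simp: PA_def partition_on_def)
  have X_sub: "X \<subseteq> PA'"
  proof
    fix \<mu> assume "\<mu> \<in> X"
    then obtain \<nu> where \<nu>: "\<nu> \<in> PA" "\<mu> = insert {a} \<nu>" by (auto simp: X_def)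
    have d: "disjnt {a} (\<Union>\<nu>)" using Un[OF \<nu>(1)] aA by (simp add: disjnt_def)
    have "insert a A - {a} = A" using aA by auto
    then show "\<mu> \<in> PA'" using \<nu> partition_on_insert[OF d] by (auto simp: PA'_def PA_def)
  qed
  have Y_sub: "Y \<subseteq> PA'"
  proof
    fix \<mu> assume "\<mu> \<in> Y"
    then obtain \<nu> B where \<nu>: "\<nu> \<in> PA" "B \<in> \<nu>" "\<mu> = insert (insert a B) (\<nu> - {B})"
      by (auto simp: Y_def \<Phi>_def)
    have "\<Union>(\<nu> - {B}) \<subseteq> A" using Un[OF \<nu>(1)] by auto
    then have d: "disjnt (insert a B) (\<Union>(\<nu> - {B}))" using blk(3)[OF \<nu>(1,2)] aA
      by (auto simp: disjnt_def)
    have e: "insert a A - insert a B = A - B" using aA by auto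
    have "partition_on (A - B) (\<nu> - {B})" using part_remove_block \<nu> by (auto simp: PA_def)
    then show "\<mu> \<in> PA'" using \<nu> partition_on_insert[OF d] e blk[OF \<nu>(1,2)] by (auto simp: PA'_def)
  qed
  have sub: "PA' \<subseteq> X \<union> Y"
  proof
    fix \<mu> assume \<mu>: "\<mu> \<in> PA'"
    then have pm: "partition_on (insert a A) \<mu>" by (simp add: PA'_def)
    then obtain C where C: "C \<in> \<mu>" "a \<in> C" by (auto simp: partition_on_def)
    define \<nu>0 where "\<nu>0 = \<mu> - {C}"
    have Cf: "C \<subseteq> insert a A" "C \<noteq> {}" "disjnt C (\<Union>\<nu>0)"
      using part_block_facts[OF pm C(1)] by (auto simp: \<nu>0_def)
    have p0: "partition_on (insert a A - C) \<nu>0" using part_remove_block[OF pm C(1)] by (simp add: \<nu>0_def)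
    have \<mu>eq: "\<mu> = insert C \<nu>0" using C by (auto simp: \<nu>0_def)
    show "\<mu> \<in> X \<union> Y"
    proof (cases "C = {a}")
      case True
      have "insert a A - C = A" using True aA by auto
      then have "\<nu>0 \<in> PA" using p0 by (simp add: PA_def)
      then show ?thesis using \<mu>eq True by (auto simp: X_def)
    next
      case False
      define B where "B = C - {a}"
      have Bne: "B \<noteq> {}" using False C(2) by (auto simp: B_def)
      have BA: "B \<subseteq> A" using Cf(1) by (auto simp: B_def)
      have dB: "disjnt B (\<Union>\<nu>0)" using Cf(3) by (auto simp: B_def disjnt_def)
      have eA: "A - B = insert a A - C" using aA C(2) by (auto simp: B_def)
      have pn: "partition_on A (insert B \<nu>0)"
        using partition_on_insert[OF dB] p0 eA Bne BA by simp
      have Bn0: "B \<notin> \<nu>0"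
      proof
        assume "B \<in> \<nu>0"
        then have "B \<subseteq> \<Union>\<nu>0" by auto
        then show False using dB Bne by (auto simp: disjnt_def)
      qed
      have "\<Phi> (insert B \<nu>0, B) = \<mu>"
        using Bn0 \<mu>eq C(2) by (auto simp: \<Phi>_def B_def)
      moreover have "(insert B \<nu>0, B) \<in> Sigma PA (\<lambda>\<nu>. \<nu>)" using pn by (simp add: PA_def)
      ultimately show ?thesis unfolding Y_def by blast
    qed
  qed
  have eqU: "PA' = X \<union> Y" using sub X_sub Y_sub by blast
  have disj: "X \<inter> Y = {}"
  proof (rule ccontr)
    assume "X \<inter> Y \<noteq> {}"
    then obtain \<nu>1 \<nu> B where h: "\<nu>1 \<in> PA" "\<nu> \<in> PA" "B \<in> \<nu>"
      "insert {a} \<nu>1 = insert (insert a B) (\<nu> - {B})"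
      by (auto simp: X_def Y_def \<Phi>_def)
    then have "{a} \<in> insert (insert a B) (\<nu> - {B})" by blast
    then show False
    proof
      assume "{a} = insert a B"
      then show False using blk[OF h(2,3)] by auto
    next
      assume "{a} \<in> \<nu> - {B}"
      then have "a \<in> \<Union>\<nu>" by blast
      then show False using Un[OF h(2)] aA by simp
    qed
  qed
  have injX: "inj_on (insert {a}) PA"
  proof (rule inj_onI)
    fix \<nu>1 \<nu>2 assume h: "\<nu>1 \<in> PA" "\<nu>2 \<in> PA" "insert {a} \<nu>1 = insert {a} \<nu>2"
    have "{a} \<notin> \<nu>1" "{a} \<notin> \<nu>2" using Un[OF h(1)] Un[OF h(2)] aA by auto
    then have "\<nu>1 = insert {a} \<nu>1 - {{a}}" "\<nu>2 = insert {a} \<nu>2 - {{a}}" by auto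
    then show "\<nu>1 = \<nu>2" using h(3) by simp
  qed
  have injY: "inj_on \<Phi> (Sigma PA (\<lambda>\<nu>. \<nu>))"
  proof (rule inj_onI, clarify)
    fix \<nu>1 B1 \<nu>2 B2
    assume h: "\<nu>1 \<in> PA" "B1 \<in> \<nu>1" "\<nu>2 \<in> PA" "B2 \<in> \<nu>2" "\<Phi> (\<nu>1, B1) = \<Phi> (\<nu>2, B2)"
    then have eq: "insert (insert a B1) (\<nu>1 - {B1}) = insert (insert a B2) (\<nu>2 - {B2})"
      by (simp add: \<Phi>_def)
    have n1: "insert a B1 \<notin> \<nu>1 - {B1}" using Un[OF h(1)] aA by auto
    have n2: "insert a B2 \<notin> \<nu>2 - {B2}" using Un[OF h(3)] aA by auto
    have "insert a B1 \<in> insert (insert a B2) (\<nu>2 - {B2})" using eq by blast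
    then have "insert a B1 = insert a B2" using Un[OF h(3)] aA by auto
    moreover have "B1 = insert a B1 - {a}" "B2 = insert a B2 - {a}"
      using blk(4)[OF h(1,2)] blk(4)[OF h(3,4)] by auto
    ultimately have B: "B1 = B2" by simp
    have "\<nu>1 - {B1} = insert (insert a B1) (\<nu>1 - {B1}) - {insert a B1}" using n1 by auto
    also have "\<dots> = insert (insert a B2) (\<nu>2 - {B2}) - {insert a B2}" using eq B by simp
    also have "\<dots> = \<nu>2 - {B2}" using n2 by auto
    finally have "\<nu>1 - {B1} = \<nu>2 - {B2}" .
    then show "\<nu>1 = \<nu>2 \<and> B1 = B2" using h(2,4) B by blast
  qed
  have "(\<Sum>\<mu> | partition_on (insert a A) \<mu>. f \<mu>) = sum f PA'" by (simp add: PA'_def)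
  also have "\<dots> = sum f X + sum f Y"
    unfolding eqU by (rule sum.union_disjoint) (use finPA finS disj in \<open>auto simp: X_def Y_def\<close>)
  also have "sum f X = (\<Sum>\<nu>\<in>PA. f (insert {a} \<nu>))"
    unfolding X_def by (simp add: sum.reindex[OF injX])
  also have "sum f Y = (\<Sum>p\<in>Sigma PA (\<lambda>\<nu>. \<nu>). f (\<Phi> p))"
    unfolding Y_def by (simp add: sum.reindex[OF injY])
  also have "\<dots> = (\<Sum>\<nu>\<in>PA. \<Sum>B\<in>\<nu>. f (\<Phi> (\<nu>, B)))"
  proof -
    have fe: "\<forall>\<nu>\<in>PA. finite \<nu>" using finite_elements[OF fin] by (auto simp: PA_def)
    show ?thesis by (simp add: sum.Sigma[OF finPA fe] split_def)
  qed
  also have "\<dots> = (\<Sum>\<nu>\<in>PA. \<Sum>B\<in>\<nu>. f (insert (insert a B) (\<nu> - {B})))"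
    by (simp add: \<Phi>_def)
  finally show ?thesis by (simp add: PA_def sum.distrib)
qed

lemma partitions_singleton: "{\<nu>. partition_on {a} \<nu>} = {{{a}}}"
proof -
  have "\<nu> = {{a}}" if "partition_on {a} \<nu>" for \<nu>
  proof -
    have u: "\<Union>\<nu> = {a}" "{} \<notin> \<nu>" using that by (auto simp: partition_on_def)
    have "B = {a}" if "B \<in> \<nu>" for B
    proof -
      have "B \<subseteq> {a}" using u(1) that by blast
      moreover have "B \<noteq> {}" using u(2) that by blast
      ultimately show ?thesis by auto
    qed
    moreover have "\<nu> \<noteq> {}" using u by auto
    ultimately show ?thesis by blast
  qed
  moreover have "partition_on {a} {{a}}" by (simp add: partition_on_space)
  ultimately show ?thesis by blast
qed

lemma faa_di_bruno:
  fixes G h :: "complex \<Rightarrow> complex"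
  assumes S: "open S" and T: "open T" and G: "G holomorphic_on T" and h: "h holomorphic_on S"
    and hST: "h ` S \<subseteq> T" and t: "t \<in> S"
  shows "(deriv ^^ m) (\<lambda>t. G (h t) * deriv h t) t =
    (\<Sum>\<nu> | partition_on {1..Suc m} \<nu>. (deriv ^^ (card \<nu> - 1)) G (h t) * (\<Prod>B\<in>\<nu>. (deriv ^^ card B) h t))"
proof -
  define \<tau> :: "nat set set \<Rightarrow> complex \<Rightarrow> complex" where "\<tau> = (\<lambda>\<nu> t. (deriv ^^ (card \<nu> - 1)) G (h t) * (\<Prod>B\<in>\<nu>. (deriv ^^ card B) h t))"
  define F where "F = (\<lambda>m t. \<Sum>\<nu> | partition_on {1..Suc m} \<nu>. \<tau> \<nu> t)"
  have DG: "((deriv ^^ k) G has_field_derivative (deriv ^^ Suc k) G y) (at y)" if "y \<in> T" for k y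
    using holomorphic_derivI[OF holomorphic_higher_deriv[OF G T] T that] by simp
  have Dh: "((deriv ^^ k) h has_field_derivative (deriv ^^ Suc k) h y) (at y)" if "y \<in> S" for k y
    using holomorphic_derivI[OF holomorphic_higher_deriv[OF h S] S that] by simp
  have Dh1: "(h has_field_derivative deriv h y) (at y)" if "y \<in> S" for y
    using Dh[OF that, of 0] by simp
  have main: "(F m has_field_derivative F (Suc m) s) (at s)" if s: "s \<in> S" for m s
  proof -
    define A where "A = {1..Suc m}"
    define a where "a = Suc (Suc m)"
    have finA: "finite A" and aA: "a \<notin> A" by (auto simp: A_def a_def)
    have A2: "{1..Suc (Suc m)} = insert a A" by (auto simp: A_def a_def)
    have hs: "h s \<in> T" using hST s by auto
    have dtau: "(\<tau> \<nu> has_field_derivative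
        (\<tau> (insert {a} \<nu>) s + (\<Sum>B\<in>\<nu>. \<tau> (insert (insert a B) (\<nu> - {B})) s))) (at s)"
      if \<nu>: "partition_on A \<nu>" for \<nu>
    proof -
      have fin\<nu>: "finite \<nu>" using finite_elements[OF finA \<nu>] .
      have c\<nu>: "card \<nu> \<ge> 1"
      proof -
        have "\<nu> \<noteq> {}" using \<nu> by (auto simp: partition_on_def A_def)
        then show ?thesis using fin\<nu> by (simp add: Suc_le_eq card_gt_0_iff)
      qed
      have blk: "B \<subseteq> A" "a \<notin> B" "finite B" if "B \<in> \<nu>" for B
        using part_block_facts[OF \<nu> that] aA finite_subset[OF _ finA] by auto
      have na: "{a} \<notin> \<nu>" using blk(2) by auto
      have d1: "((\<lambda>t. (deriv ^^ (card \<nu> - 1)) G (h t)) has_field_derivative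
                 (deriv ^^ card \<nu>) G (h s) * deriv h s) (at s)"
        using DERIV_chain2[OF DG[OF hs, of "card \<nu> - 1"] Dh1[OF s]] c\<nu> by simp
      have d2: "((\<lambda>t. \<Prod>B\<in>\<nu>. (deriv ^^ card B) h t) has_field_derivative
                 (\<Sum>B\<in>\<nu>. (deriv ^^ Suc (card B)) h s * (\<Prod>C\<in>\<nu> - {B}. (deriv ^^ card C) h s))) (at s)"
        by (rule has_field_derivative_prod) (rule Dh[OF s])
      have e1: "\<tau> (insert {a} \<nu>) s = (deriv ^^ card \<nu>) G (h s) * deriv h s * (\<Prod>B\<in>\<nu>. (deriv ^^ card B) h s)"
        using fin\<nu> na by (simp add: \<tau>_def mult.assoc)
      have e2: "\<tau> (insert (insert a B) (\<nu> - {B})) s = (deriv ^^ (card \<nu> - 1)) G (h s) *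
                ((deriv ^^ Suc (card B)) h s * (\<Prod>C\<in>\<nu> - {B}. (deriv ^^ card C) h s))" if B: "B \<in> \<nu>" for B
      proof -
        have ni: "insert a B \<notin> \<nu> - {B}" using blk(2) B by auto
        have "card (insert (insert a B) (\<nu> - {B})) = card \<nu>"
          using ni fin\<nu> B c\<nu> by (simp add: card_Diff_singleton)
        moreover have "card (insert a B) = Suc (card B)" using blk[OF B] by simp
        ultimately show ?thesis using ni fin\<nu> by (simp add: \<tau>_def)
      qed
      have "(\<tau> \<nu> has_field_derivative
          (deriv ^^ card \<nu>) G (h s) * deriv h s * (\<Prod>B\<in>\<nu>. (deriv ^^ card B) h s) +
          (deriv ^^ (card \<nu> - 1)) G (h s) *
          (\<Sum>B\<in>\<nu>. (deriv ^^ Suc (card B)) h s * (\<Prod>C\<in>\<nu> - {B}. (deriv ^^ card C) h s))) (at s)"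
        unfolding \<tau>_def by (rule DERIV_mult[OF d1 d2, THEN DERIV_cong]) (simp add: algebra_simps)
      then show ?thesis by (simp add: e1 e2 sum_distrib_left)
    qed
    have "(F m has_field_derivative
        (\<Sum>\<nu> | partition_on A \<nu>. \<tau> (insert {a} \<nu>) s + (\<Sum>B\<in>\<nu>. \<tau> (insert (insert a B) (\<nu> - {B})) s))) (at s)"
      unfolding F_def A_def[symmetric] by (rule DERIV_sum) (rule dtau, simp)
    also have "(\<Sum>\<nu> | partition_on A \<nu>. \<tau> (insert {a} \<nu>) s + (\<Sum>B\<in>\<nu>. \<tau> (insert (insert a B) (\<nu> - {B})) s))
        = F (Suc m) s"
      unfolding F_def A2 by (rule part_insert_sum[OF finA aA, symmetric])
    finally show ?thesis .
  qed
  have base: "G (h s) * deriv h s = F 0 s" for s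
    by (simp add: F_def \<tau>_def partitions_singleton)
  show ?thesis
    using higher_deriv_seq[OF S, of "\<lambda>t. G (h t) * deriv h t" F, OF base main t]
    by (simp add: F_def \<tau>_def)
qed

lemma ipow2: "\<i>^(2*q) = (-1::complex)^q" "(-\<i>)^(2*q) = (-1::complex)^q"
  by (simp_all add: power_mult)

lemma m1sq: "((-1::complex)^q) * (-1)^q = 1"
  by (simp flip: power_add add: power_mult[symmetric] mult_2[symmetric] mult.commute)

lemma hv_val:
  "(-1)^j * fact j * ((-\<i>/2)/(0 - \<i>)^Suc j + (\<i>/2)/(0 - (-\<i>))^Suc j)
     = (if even j then fact j * (-1::complex)^(j div 2) else 0)"
proof (cases "even j")
  case True
  then obtain q where j: "j = 2*q" by (auto elim: evenE)
  have "(-\<i>/2)/(-\<i>)^Suc (2*q) + (\<i>/2)/(\<i>)^Suc (2*q) = (-1::complex)^q"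
    using m1sq[of q] by (simp add: ipow2 field_simps)
  then show ?thesis using j by (simp add: power_mult)
next
  case False
  then obtain q where j: "j = Suc (2*q)" by (metis oddE Suc_eq_plus1)
  have "(-\<i>/2)/(-\<i>)^Suc (Suc (2*q)) + (\<i>/2)/(\<i>)^Suc (Suc (2*q)) = 0"
    by (simp add: ipow2 field_simps)
  then show ?thesis using j by simp
qed

lemma Rv_val:
  "(-1)^j * fact j * ((1/2)/(0 - \<i>)^Suc j + (1/2)/(0 - (-\<i>))^Suc j)
     = (if odd j then fact j * (-1::complex)^((j - 1) div 2) else 0)"
proof (cases "even j")
  case True
  then obtain q where j: "j = 2*q" by (auto elim: evenE)
  have "(1/2)/(-\<i>)^Suc (2*q) + (1/2)/(\<i>)^Suc (2*q) = (0::complex)"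
    by (simp add: ipow2 field_simps)
  then show ?thesis using j by simp
next
  case False
  then obtain q where j: "j = Suc (2*q)" by (metis oddE Suc_eq_plus1)
  have "(1/2)/(-\<i>)^Suc (Suc (2*q)) + (1/2)/(\<i>)^Suc (Suc (2*q)) = - ((-1::complex)^q)"
    using m1sq[of q] by (simp add: ipow2 field_simps)
  then show ?thesis using j by (simp add: power_mult)
qed

lemma cot_term:
  fixes X p :: complex
  assumes sX: "sin X \<noteq> 0" and cp: "cos p \<noteq> 0" and sXp: "sin (X - p) \<noteq> 0"
  shows "cot X / (1 - (sin p / cos p) * cot X) = (cos p)^2 * cot (X - p) - sin p * cos p"
proof -
  have d: "sin (X - p) = sin X * cos p - cos X * sin p" by (simp add: sin_diff)
  have cX: "cos X = cos (X - p) * cos p - sin (X - p) * sin p" using cos_add[of "X-p" p] by simp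
  have "cot X / (1 - (sin p / cos p) * cot X) = cos X * cos p / (sin X * cos p - cos X * sin p)"
    using sX cp sXp d by (simp add: cot_def field_simps)
  also have "\<dots> = cos p * cos X / sin (X - p)" by (simp add: d mult.commute)
  also have "\<dots> = cos p * (cos (X - p) * cos p - sin (X - p) * sin p) / sin (X - p)"
    by (simp only: cX[symmetric])
  also have "\<dots> = (cos p)^2 * cot (X - p) - sin p * cos p"
    using sXp by (simp add: cot_def field_simps power2_eq_square)
  finally show ?thesis .
qed

lemma ball1_sq: "t \<in> ball (0::complex) 1 \<Longrightarrow> t^2 \<noteq> -1"
proof
  assume t: "t \<in> ball (0::complex) 1" and e: "t^2 = -1"
  have "norm t < 1" using t by simp
  then have "norm (t^2) < 1" by (simp add: norm_power power_less_one_iff)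
  then show False using e by simp
qed

lemma block_one:
  assumes "odd b"
  shows "(-\<i>)^b * (\<i> * of_nat n) * of_int ((-1)^(b - 1) * fact (b - 1))
       = (-1) * (- of_nat n * (if even (b - 1) then fact (b - 1) * (-1::complex)^((b - 1) div 2) else 0))"
proof -
  obtain q where b: "b = Suc (2*q)" using assms by (metis oddE Suc_eq_plus1)
  have e1: "(-\<i>)^(Suc (2*q)) = (-\<i>) * (-1::complex)^q" by (simp add: ipow2)
  have e2: "(-1::complex)^(2*q) = 1" by (simp add: power_mult)
  have "(-\<i>)^b * (\<i> * of_nat n) * of_int ((-1)^(b - 1) * fact (b - 1))
      = ((-\<i>) * \<i>) * ((-1::complex)^q * of_nat n * fact (2*q))"
    using b e1 e2 by (simp add: of_int_fact mult_ac)
  also have "\<dots> = (-1::complex)^q * of_nat n * fact (2*q)" by simp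
  finally show ?thesis using b by simp
qed

lemma block_identity:
  fixes P :: complex
  assumes p: "partition_on {1..m} \<nu>" and odd: "\<forall>B\<in>\<nu>. odd (card B)" and m: "m \<ge> 1"
  shows "(-\<i>)^m * P * (\<i> * of_nat n)^card \<nu> * of_int (mobius_part \<nu>)
       = -((-1)^(card \<nu> - 1) * P) * (\<Prod>B\<in>\<nu>. - of_nat n * (if even (card B - 1) then fact (card B - 1) * (-1::complex)^((card B - 1) div 2) else 0))"
proof -
  have fin: "finite \<nu>" using finite_elements[OF _ p] by simp
  have finB: "finite B" if "B \<in> \<nu>" for B using part_block_facts(1)[OF p that] finite_subset by blast
  have mU: "m = (\<Sum>B\<in>\<nu>. card B)"
  proof -
    have "card (\<Union>\<nu>) = (\<Sum>B\<in>\<nu>. card B)"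
      by (rule card_Union_disjoint) (use p finB in \<open>auto simp: partition_on_def disjoint_def\<close>)
    moreover have "\<Union>\<nu> = {1..m}" using p by (simp add: partition_on_def)
    ultimately show ?thesis by simp
  qed
  have ne: "\<nu> \<noteq> {}" using p m by (auto simp: partition_on_def)
  then have c1: "card \<nu> \<ge> 1" using fin by (simp add: Suc_le_eq card_gt_0_iff)
  have s1: "-((-1::complex)^(card \<nu> - 1) * P) = P * (\<Prod>B\<in>\<nu>. -1)"
  proof -
    have "(-1::complex)^(card \<nu>) = (-1) * (-1)^(card \<nu> - 1)" using c1 by (metis Suc_diff_1 less_le_trans zero_less_one power_Suc)
    then show ?thesis by simp
  qed
  have "(-\<i>)^m * P * (\<i> * of_nat n)^card \<nu> * of_int (mobius_part \<nu>)
      = P * (\<Prod>B\<in>\<nu>. (-\<i>)^(card B) * (\<i> * of_nat n) * of_int ((-1)^(card B - 1) * fact (card B - 1)))"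
  proof -
    have "(\<Prod>B\<in>\<nu>. (-\<i>)^(card B) * (\<i> * of_nat n) * of_int ((-1)^(card B - 1) * fact (card B - 1)))
       = (\<Prod>B\<in>\<nu>. (-\<i>)^(card B)) * (\<Prod>B\<in>\<nu>. (\<i> * of_nat n)) * (\<Prod>B\<in>\<nu>. of_int ((-1)^(card B - 1) * fact (card B - 1)))"
      by (simp only: prod.distrib)
    also have "\<dots> = (-\<i>)^m * (\<i> * of_nat n)^card \<nu> * of_int (mobius_part \<nu>)"
      unfolding mU mobius_part_def power_sum of_int_prod prod_constant ..
    finally show ?thesis by (simp add: mult_ac)
  qed
  also have "\<dots> = P * (\<Prod>B\<in>\<nu>. (-1) * (- of_nat n * (if even (card B - 1) then fact (card B - 1) * (-1::complex)^((card B - 1) div 2) else 0)))"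
    using odd by (intro arg_cong[where f="\<lambda>x. P * x"] prod.cong refl block_one) auto
  also have "\<dots> = -((-1)^(card \<nu> - 1) * P) * (\<Prod>B\<in>\<nu>. - of_nat n * (if even (card B - 1) then fact (card B - 1) * (-1::complex)^((card B - 1) div 2) else 0))"
    unfolding s1 prod.distrib by (simp add: mult_ac)
  finally show ?thesis .
qed

theorem theorem6p1:
  fixes m n :: nat and \<alpha> :: real
  assumes "m \<ge> 1" and "n \<ge> 2" and "\<forall>j::int. \<alpha> \<noteq> of_int j * pi"
  shows "complex_of_real (\<Sum>k<n. cot ((\<alpha> + real k * pi) / real n) ^ m)
    = complex_of_real ((-1) ^ (m div 2) * real n * (if even m then 1 else 0))
      + ((- \<i>) ^ m / of_nat (fact (m - 1))) *
        (\<Sum>\<nu>\<in>odd_partitions m.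
           complex_of_real (poly (deriv_poly (card \<nu> - 1)) (cot \<alpha>))
           * (\<i> * of_nat n) ^ card \<nu> * of_int (mobius_part \<nu>))"
proof -
  have n0: "n > 0" using assms(2) by simp
  define a' where "a' = complex_of_real \<alpha>"
  define \<theta> where "\<theta> = (\<lambda>k::nat. (\<alpha> + real k * pi) / real n)"
  define C where "C = (\<lambda>k. complex_of_real (cot (\<theta> k)))"
  define \<Theta> where "\<Theta> = (\<lambda>k. complex_of_real (\<theta> k))"
  have C\<Theta>: "C k = cot (\<Theta> k)" for k by (simp add: C_def \<Theta>_def cot_of_real)
  have sin\<theta>: "sin (\<theta> k) \<noteq> 0" for k
  proof
    assume "sin (\<theta> k) = 0"
    then obtain i :: int where i: "\<theta> k = of_int i * pi" by (auto simp: sin_zero_iff_int2)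
    then have "\<alpha> + real k * pi = real n * (of_int i * pi)" using n0 by (simp add: \<theta>_def field_simps)
    then have "\<alpha> = of_int (int n * i - int k) * pi" by (simp add: algebra_simps)
    then show False using assms(3) by blast
  qed
  have sin\<Theta>: "sin (\<Theta> k) \<noteq> 0" for k
    using sin\<theta>[of k] by (simp add: \<Theta>_def sin_of_real)
  have sina: "sin a' \<noteq> 0"
  proof -
    have "sin \<alpha> \<noteq> 0" using assms(3) by (auto simp: sin_zero_iff_int2)
    then show ?thesis by (simp add: a'_def sin_of_real)
  qed
  define h where "h = (\<lambda>t::complex. - of_nat n * Arctan t)"
  define G0 where "G0 = (\<lambda>y. - cot (a' + y))"
  define T where "T = {y. sin (a' + y) \<noteq> 0}"
  define pf1 where "pf1 = (\<lambda>t::complex. (-\<i>/2)/(t - \<i>) + (\<i>/2)/(t - (-\<i>)))"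
  define pf2 where "pf2 = (\<lambda>t::complex. (1/2)/(t - \<i>) + (1/2)/(t - (-\<i>)))"
  define R where "R = (\<lambda>t. - of_nat n * pf2 t)"
  define g where "g = (\<lambda>t. \<Sum>k<n. C k / (1 - t * C k))"
  define Q where "Q = (\<lambda>t. sin (a' + h t) * cos (Arctan t) * (\<Prod>k<n. sin (\<Theta> k - Arctan t)) * (\<Prod>k<n. (1 - t * C k)))"
  define U where "U = ball 0 1 \<inter> Q -` (-{0})"
  have ball_cond: "\<bar>Im z\<bar> < 1" if "z \<in> ball 0 1" for z
    using abs_Im_le_cmod[of z] that by simp
  have openU: "open U" unfolding U_def
    by (rule continuous_open_preimage) (auto simp: Q_def h_def intro!: continuous_intros ball_cond)
  have U0: "0 \<in> U"
    using sina sin\<Theta> by (simp add: U_def Q_def h_def)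
  have Uball: "U \<subseteq> ball 0 1" by (auto simp: U_def)
  have QU: "sin (a' + h t) \<noteq> 0" "cos (Arctan t) \<noteq> 0" "\<And>k. k < n \<Longrightarrow> sin (\<Theta> k - Arctan t) \<noteq> 0"
     "\<And>k. k < n \<Longrightarrow> 1 - t * C k \<noteq> 0" if "t \<in> U" for t
    using that by (auto simp: U_def Q_def)
  have pf1_eq: "pf1 t = inverse (1 + t^2)" if "t^2 \<noteq> -1" for t
  proof -
    have "t \<noteq> \<i>" "t \<noteq> -\<i>" using that by auto
    then have nz: "t - \<i> \<noteq> 0" "t - (-\<i>) \<noteq> 0" by (simp_all only: right_minus_eq not_False_eq_True)
    have e: "(t - \<i>) * (t - (-\<i>)) = 1 + t^2" by (simp add: algebra_simps power2_eq_square)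
    have "pf1 t = ((-\<i>/2)*(t - (-\<i>)) + (\<i>/2)*(t - \<i>)) / ((t - \<i>) * (t - (-\<i>)))"
      unfolding pf1_def by (rule add_frac_eq[OF nz])
    also have "(-\<i>/2)*(t - (-\<i>)) + (\<i>/2)*(t - \<i>) = 1" by (simp add: field_simps)
    finally show ?thesis by (simp only: e inverse_eq_divide)
  qed
  have pf2_eq: "pf2 t = t / (1 + t^2)" if "t^2 \<noteq> -1" for t
  proof -
    have "t \<noteq> \<i>" "t \<noteq> -\<i>" using that by auto
    then have nz: "t - \<i> \<noteq> 0" "t - (-\<i>) \<noteq> 0" by (simp_all only: right_minus_eq not_False_eq_True)
    have e: "(t - \<i>) * (t - (-\<i>)) = 1 + t^2" by (simp add: algebra_simps power2_eq_square)
    have "pf2 t = ((1/2)*(t - (-\<i>)) + (1/2)*(t - \<i>)) / ((t - \<i>) * (t - (-\<i>)))"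
      unfolding pf2_def by (rule add_frac_eq[OF nz])
    also have "(1/2)*(t - (-\<i>)) + (1/2)*(t - \<i>) = t" by (simp add: field_simps)
    finally show ?thesis by (simp only: e)
  qed
  have dh: "deriv h t = - of_nat n * pf1 t" if "t \<in> ball 0 1" for t
  proof -
    have "(h has_field_derivative - of_nat n * inverse (1 + t^2)) (at t)"
      unfolding h_def using ball_cond[OF that]
      by (intro DERIV_cmult has_field_derivative_Arctan) auto
    then show ?thesis using pf1_eq[OF ball1_sq[OF that]] by (simp add: DERIV_imp_deriv)
  qed
  have hol_h: "h holomorphic_on U"
    unfolding h_def using Uball ball_cond
    by (intro holomorphic_intros holomorphic_on_Arctan) auto
  have openT: "open T" unfolding T_def
    by (rule open_Collect_neq) (auto intro!: continuous_intros)
  have hol_G0: "G0 holomorphic_on T"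
    unfolding G0_def T_def cot_def by (intro holomorphic_intros) auto
  have hST: "h ` U \<subseteq> T" using QU(1) by (auto simp: T_def)
  have faa: "(deriv ^^ (m - 1)) (\<lambda>t. G0 (h t) * deriv h t) 0 =
    (\<Sum>\<nu> | partition_on {1..Suc (m - 1)} \<nu>. (deriv ^^ (card \<nu> - 1)) G0 (h 0) * (\<Prod>B\<in>\<nu>. (deriv ^^ card B) h 0))"
    by (rule faa_di_bruno[OF openU openT hol_G0 hol_h hST U0])
  have ident: "g t = G0 (h t) * deriv h t + R t" if t: "t \<in> U" for t
  proof -
    define \<phi> where "\<phi> = Arctan t"
    have tb: "t \<in> ball 0 1" using t Uball by auto
    have tsq: "t^2 \<noteq> -1" by (rule ball1_sq[OF tb])
    have c\<phi>: "cos \<phi> \<noteq> 0" using QU(2)[OF t] by (simp add: \<phi>_def)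
    have tt: "t = sin \<phi> / cos \<phi>" using tan_Arctan[OF tsq] by (simp add: \<phi>_def tan_def)
    have trm: "C k / (1 - t * C k) = (cos \<phi>)^2 * cot (\<Theta> k - \<phi>) - sin \<phi> * cos \<phi>" if "k < n" for k
    proof -
      have s3: "sin (\<Theta> k - \<phi>) \<noteq> 0" using QU(3)[OF t that] by (simp add: \<phi>_def)
      have "C k / (1 - t * C k) = cot (\<Theta> k) / (1 - (sin \<phi> / cos \<phi>) * cot (\<Theta> k))"
        by (simp only: C\<Theta> tt[symmetric])
      also have "\<dots> = (cos \<phi>)^2 * cot (\<Theta> k - \<phi>) - sin \<phi> * cos \<phi>"
        by (rule cot_term[OF sin\<Theta>[of k] c\<phi> s3])
      finally show ?thesis .
    qed
    have gt: "g t = (cos \<phi>)^2 * (\<Sum>k<n. cot (\<Theta> k - \<phi>)) - of_nat n * (sin \<phi> * cos \<phi>)"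
      by (simp add: g_def trm sum_subtractf sum_distrib_left)
    define x where "x = (a' - of_nat n * \<phi>) / of_nat n"
    have nx: "of_nat n * x = a' + h t" using n0 by (simp add: x_def h_def \<phi>_def)
    have Tx: "\<Theta> k - \<phi> = x + of_nat k * complex_of_real pi / of_nat n" for k
      using n0 by (simp add: \<Theta>_def \<theta>_def x_def a'_def field_simps)
    have cs: "(\<Sum>k<n. cot (\<Theta> k - \<phi>)) = of_nat n * cot (a' + h t)"
      using cot_sum[OF n0, of x] QU(1)[OF t] unfolding Tx nx by simp
    have one: "cos \<phi> * cos \<phi> + sin \<phi> * sin \<phi> = 1" using sin_cos_squared_add2[of \<phi>] by (simp add: power2_eq_square)
    have c2: "(cos \<phi>)^2 = inverse (1 + t^2)"
    proof -
      have "1 + t^2 = (cos \<phi> * cos \<phi> + sin \<phi> * sin \<phi>) / (cos \<phi>)^2"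
        using c\<phi> by (simp add: tt field_simps power2_eq_square)
      then have "1 + t^2 = inverse ((cos \<phi>)^2)" by (simp add: one divide_inverse)
      then show ?thesis by simp
    qed
    have sc: "sin \<phi> * cos \<phi> = t * inverse (1 + t^2)"
    proof -
      have "sin \<phi> * cos \<phi> = t * (cos \<phi>)^2" using c\<phi> by (simp add: tt power2_eq_square)
      then show ?thesis by (simp only: c2)
    qed
    show ?thesis
      unfolding gt cs sc c2 R_def G0_def dh[OF tb] pf1_eq[OF tsq] pf2_eq[OF tsq]
      by (simp add: algebra_simps divide_inverse)
  qed
  have hol1: "(\<lambda>t. G0 (h t) * deriv h t) holomorphic_on U"
  proof -
    have "(G0 \<circ> h) holomorphic_on U" by (rule holomorphic_on_compose_gen[OF hol_h hol_G0 hST])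
    then show ?thesis using holomorphic_deriv[OF hol_h openU]
      by (intro holomorphic_intros) (auto simp: o_def hol_h openU)
  qed
  have hol2: "R holomorphic_on U"
  proof -
    have "t \<noteq> \<i>" "t \<noteq> -\<i>" if "t \<in> U" for t using ball1_sq[of t] Uball that by auto
    then have "t + \<i> \<noteq> 0" "t - \<i> \<noteq> 0" if "t \<in> U" for t using that by (auto simp: eq_neg_iff_add_eq_0)
    then show ?thesis unfolding R_def pf2_def by (intro holomorphic_intros) auto
  qed
  have gder: "(deriv ^^ (m - 1)) g 0 = fact (m - 1) * (\<Sum>k<n. C k ^ m)"
  proof -
    have "(deriv ^^ (m - 1)) g 0 = (\<Sum>k<n. fact (m - 1) * C k ^ Suc (m - 1) / (1 - 0 * C k) ^ Suc (m - 1))"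
    proof (rule higher_deriv_seq[OF openU, where F="\<lambda>j t. \<Sum>k<n. fact j * C k ^ Suc j / (1 - t * C k) ^ Suc j"])
      show "g t = (\<Sum>k<n. fact 0 * C k ^ Suc 0 / (1 - t * C k) ^ Suc 0)" for t
        by (simp add: g_def)
      show "((\<lambda>t. \<Sum>k<n. fact j * C k ^ Suc j / (1 - t * C k) ^ Suc j) has_field_derivative
            (\<Sum>k<n. fact (Suc j) * C k ^ Suc (Suc j) / (1 - t * C k) ^ Suc (Suc j))) (at t)"
        if "t \<in> U" for j t
        by (rule DERIV_sum) (rule d_geom[OF QU(4)[OF that]], simp)
    qed (rule U0)
    also have "\<dots> = fact (m - 1) * (\<Sum>k<n. C k ^ m)"
      using assms(1) by (simp add: sum_distrib_left)
    finally show ?thesis .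
  qed
  have main: "fact (m - 1) * (\<Sum>k<n. C k ^ m) = (deriv ^^ (m - 1)) (\<lambda>t. G0 (h t) * deriv h t) 0 + (deriv ^^ (m - 1)) R 0"
  proof -
    have "(deriv ^^ (m - 1)) g 0 = (deriv ^^ (m - 1)) (\<lambda>t. G0 (h t) * deriv h t + R t) 0"
      by (rule higher_deriv_cong_ev) (use ident openU U0 in \<open>auto intro: eventually_nhds_in_open eventually_mono\<close>)
    also have "\<dots> = (deriv ^^ (m - 1)) (\<lambda>t. G0 (h t) * deriv h t) 0 + (deriv ^^ (m - 1)) R 0"
      by (rule higher_deriv_add[OF hol1 hol2 openU U0])
    finally show ?thesis using gder by simp
  qed
  have Gv: "(deriv ^^ j) G0 0 = -((-1)^j * complex_of_real (poly (deriv_poly j) (cot \<alpha>)))" for j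
  proof -
    have s0: "sin (a' + 0) \<noteq> 0" using sina by simp
    have "(deriv ^^ j) G0 0 = -((-1)^j * poly (Pc j) (cot (a' + 0)))"
      unfolding G0_def by (rule hd_cot_shift[OF s0])
    also have "poly (Pc j) (cot (a' + 0)) = complex_of_real (poly (deriv_poly j) (cot \<alpha>))"
      by (simp add: Pc_def a'_def mp_poly flip: cot_of_real)
    finally show ?thesis .
  qed
  have ev_ball: "eventually (\<lambda>t. t \<in> ball (0::complex) 1) (nhds 0)"
    by (rule eventually_nhds_in_open) auto
  have hol_pf1: "pf1 holomorphic_on - {\<i>, -\<i>}"
  proof -
    have "t + \<i> \<noteq> 0" "t - \<i> \<noteq> 0" if "t \<in> - {\<i>, -\<i>}" for t using that by (auto simp: eq_neg_iff_add_eq_0)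
    then show ?thesis unfolding pf1_def by (intro holomorphic_intros) auto
  qed
  have hol_pf2: "pf2 holomorphic_on - {\<i>, -\<i>}"
  proof -
    have "t + \<i> \<noteq> 0" "t - \<i> \<noteq> 0" if "t \<in> - {\<i>, -\<i>}" for t using that by (auto simp: eq_neg_iff_add_eq_0)
    then show ?thesis unfolding pf2_def by (intro holomorphic_intros) auto
  qed
  have op2: "open (- {\<i>, -\<i>} :: complex set)" by auto
  have in2: "(0::complex) \<in> - {\<i>, -\<i>}" by auto
  have hv: "(deriv ^^ Suc j) h 0 = - of_nat n * (if even j then fact j * (-1)^(j div 2) else 0)" for j
  proof -
    have "(deriv ^^ Suc j) h 0 = (deriv ^^ j) (deriv h) 0" by (simp add: funpow_Suc_right del: funpow.simps)
    also have "\<dots> = (deriv ^^ j) (\<lambda>t. - of_nat n * pf1 t) 0"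
      by (rule higher_deriv_cong_ev[OF eventually_mono[OF ev_ball]]) (simp_all add: dh)
    also have "\<dots> = - of_nat n * (deriv ^^ j) pf1 0"
      by (rule higher_deriv_cmult[OF hol_pf1 in2 op2])
    also have "(deriv ^^ j) pf1 0 = (-1)^j * fact j * ((-\<i>/2)/(0 - \<i>)^Suc j + (\<i>/2)/(0 - (-\<i>))^Suc j)"
      unfolding pf1_def by (rule hd_pf) auto
    finally show ?thesis by (simp only: hv_val)
  qed
  have Rv: "(deriv ^^ j) R 0 = - of_nat n * (if odd j then fact j * (-1)^((j - 1) div 2) else 0)" for j
  proof -
    have "(deriv ^^ j) R 0 = - of_nat n * (deriv ^^ j) pf2 0"
      unfolding R_def by (rule higher_deriv_cmult[OF hol_pf2 in2 op2])
    also have "(deriv ^^ j) pf2 0 = (-1)^j * fact j * ((1/2)/(0 - \<i>)^Suc j + (1/2)/(0 - (-\<i>))^Suc j)"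
      unfolding pf2_def by (rule hd_pf) auto
    finally show ?thesis by (simp only: Rv_val)
  qed
  define Pv where "Pv = (\<lambda>\<nu>::nat set set. complex_of_real (poly (deriv_poly (card \<nu> - 1)) (cot \<alpha>)))"
  define X where "X = (\<lambda>\<nu>::nat set set. Pv \<nu> * (\<i> * of_nat n) ^ card \<nu> * of_int (mobius_part \<nu>))"
  define HB where "HB = (\<lambda>B::nat set. - of_nat n * (if even (card B - 1) then fact (card B - 1) * (-1::complex)^((card B - 1) div 2) else 0))"
  have h0: "h 0 = 0" by (simp add: h_def)
  have term_eq: "(deriv ^^ (card \<nu> - 1)) G0 (h 0) * (\<Prod>B\<in>\<nu>. (deriv ^^ card B) h 0)
      = -((-1)^(card \<nu> - 1) * Pv \<nu>) * (\<Prod>B\<in>\<nu>. HB B)" if p: "partition_on {1..m} \<nu>" for \<nu>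
  proof -
    have "(deriv ^^ card B) h 0 = HB B" if B: "B \<in> \<nu>" for B
    proof -
      have "finite B" using part_block_facts(1)[OF p B] finite_subset by blast
      moreover have "B \<noteq> {}" using part_block_facts(2)[OF p B] .
      ultimately have "card B = Suc (card B - 1)" by (simp add: card_gt_0_iff)
      then have "(deriv ^^ card B) h 0 = (deriv ^^ Suc (card B - 1)) h 0" by simp
      then show ?thesis by (simp only: hv HB_def)
    qed
    then show ?thesis by (simp add: h0 Gv Pv_def)
  qed
  have fin_part: "finite {\<nu>. partition_on {1..m} \<nu>}" by (rule finitely_many_partition_on) simp
  have sum_eq: "(\<Sum>\<nu> | partition_on {1..m} \<nu>. (deriv ^^ (card \<nu> - 1)) G0 (h 0) * (\<Prod>B\<in>\<nu>. (deriv ^^ card B) h 0))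
      = (\<Sum>\<nu>\<in>odd_partitions m. (-\<i>)^m * X \<nu>)"
  proof -
    have "(\<Sum>\<nu> | partition_on {1..m} \<nu>. (deriv ^^ (card \<nu> - 1)) G0 (h 0) * (\<Prod>B\<in>\<nu>. (deriv ^^ card B) h 0))
        = (\<Sum>\<nu> | partition_on {1..m} \<nu>. -((-1)^(card \<nu> - 1) * Pv \<nu>) * (\<Prod>B\<in>\<nu>. HB B))"
      by (rule sum.cong[OF refl], rule term_eq) simp
    also have "\<dots> = (\<Sum>\<nu>\<in>odd_partitions m. -((-1)^(card \<nu> - 1) * Pv \<nu>) * (\<Prod>B\<in>\<nu>. HB B))"
    proof (rule sum.mono_neutral_right[OF fin_part])
      show "odd_partitions m \<subseteq> {\<nu>. partition_on {1..m} \<nu>}" by (auto simp: odd_partitions_def)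
      show "\<forall>\<nu>\<in>{\<nu>. partition_on {1..m} \<nu>} - odd_partitions m. -((-1)^(card \<nu> - 1) * Pv \<nu>) * (\<Prod>B\<in>\<nu>. HB B) = 0"
      proof
        fix \<nu> assume "\<nu> \<in> {\<nu>. partition_on {1..m} \<nu>} - odd_partitions m"
        then have p: "partition_on {1..m} \<nu>" and "\<exists>B\<in>\<nu>. even (card B)" by (auto simp: odd_partitions_def)
        then obtain B where B: "B \<in> \<nu>" "even (card B)" by blast
        have "finite B" using part_block_facts(1)[OF p B(1)] finite_subset by blast
        moreover have "B \<noteq> {}" using part_block_facts(2)[OF p B(1)] .
        ultimately have "card B \<ge> 1" by (simp add: Suc_le_eq card_gt_0_iff)
        then have "odd (card B - 1)" using B(2) by simp
        then have "HB B = 0" by (simp add: HB_def)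
        moreover have "finite \<nu>" using finite_elements[OF _ p] by simp
        ultimately have "(\<Prod>B\<in>\<nu>. HB B) = 0" using B(1) by (simp add: prod_zero_iff) blast
        then show "-((-1)^(card \<nu> - 1) * Pv \<nu>) * (\<Prod>B\<in>\<nu>. HB B) = 0" by simp
      qed
    qed
    also have "\<dots> = (\<Sum>\<nu>\<in>odd_partitions m. (-\<i>)^m * X \<nu>)"
    proof (rule sum.cong[OF refl])
      fix \<nu> assume "\<nu> \<in> odd_partitions m"
      then have p: "partition_on {1..m} \<nu>" and o: "\<forall>B\<in>\<nu>. odd (card B)" by (auto simp: odd_partitions_def)
      show "-((-1)^(card \<nu> - 1) * Pv \<nu>) * (\<Prod>B\<in>\<nu>. HB B) = (-\<i>)^m * X \<nu>"
        using block_identity[OF p o assms(1), of "Pv \<nu>" n] by (simp add: X_def HB_def mult.assoc)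
    qed
    finally show ?thesis .
  qed
  have F1: "(fact (m - 1) :: complex) \<noteq> 0" by simp
  have Rm: "(deriv ^^ (m - 1)) R 0 = fact (m - 1) * complex_of_real ((-1) ^ (m div 2) * real n * (if even m then 1 else 0))"
  proof (cases "even m")
    case True
    then obtain q' where q': "m = 2*q'" by (auto elim: evenE)
    then have "q' \<noteq> 0" using assms(1) by auto
    then obtain q where "q' = Suc q" by (cases q') auto
    then have q: "m = Suc (Suc (2*q))" using q' by simp
    have r: "(deriv ^^ (m - 1)) R 0 = - of_nat n * (if odd (m - 1) then fact (m - 1) * (-1)^((m - 1 - 1) div 2) else 0)"
      by (rule Rv)
    have "m div 2 = Suc q" using q by simp
    then show ?thesis using q r by (simp del: funpow.simps)
  next
    case False
    have r: "(deriv ^^ (m - 1)) R 0 = - of_nat n * (if odd (m - 1) then fact (m - 1) * (-1)^((m - 1 - 1) div 2) else 0)"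
      by (rule Rv)
    then show ?thesis using False assms(1) by (simp del: funpow.simps)
  qed
  have "fact (m - 1) * (\<Sum>k<n. C k ^ m) = (\<Sum>\<nu>\<in>odd_partitions m. (-\<i>)^m * X \<nu>) + fact (m - 1) * complex_of_real ((-1) ^ (m div 2) * real n * (if even m then 1 else 0))"
    using main faa sum_eq Rm assms(1) by simp
  then have fin: "(\<Sum>k<n. C k ^ m) = complex_of_real ((-1) ^ (m div 2) * real n * (if even m then 1 else 0)) + ((-\<i>)^m / fact (m - 1)) * (\<Sum>\<nu>\<in>odd_partitions m. X \<nu>)"
  proof -
    assume eq: "fact (m - 1) * (\<Sum>k<n. C k ^ m) = (\<Sum>\<nu>\<in>odd_partitions m. (-\<i>)^m * X \<nu>) + fact (m - 1) * complex_of_real ((-1) ^ (m div 2) * real n * (if even m then 1 else 0))"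
    define S where "S = (\<Sum>k<n. C k ^ m)"
    define A where "A = (\<Sum>\<nu>\<in>odd_partitions m. X \<nu>)"
    define B where "B = complex_of_real ((-1) ^ (m div 2) * real n * (if even m then 1 else 0))"
    have eq': "fact (m - 1) * S = (-\<i>)^m * A + fact (m - 1) * B"
      using eq by (simp add: S_def A_def B_def sum_distrib_left)
    have "S = (fact (m - 1) * S) / fact (m - 1)" using F1 by simp
    also have "\<dots> = ((-\<i>)^m * A + fact (m - 1) * B) / fact (m - 1)" by (simp only: eq')
    also have "\<dots> = B + ((-\<i>)^m / fact (m - 1)) * A" using F1 by (simp add: add_divide_distrib)
    finally show ?thesis by (simp add: S_def A_def B_def)
  qed
  have L: "complex_of_real (\<Sum>k<n. cot ((\<alpha> + real k * pi) / real n) ^ m) = (\<Sum>k<n. C k ^ m)"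
    unfolding C_def \<theta>_def of_real_sum of_real_power ..
  have fo: "(of_nat (fact (m - 1)) :: complex) = fact (m - 1)" by (rule of_nat_fact)
  show ?thesis unfolding L fo fin X_def Pv_def ..
qed

end
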